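(* Let $p$ be an odd prime and let $q\in\mathbb{C}_p$ satisfy $|1-q|_p<p^{-1/(p-1)}$. Then for every integer $n\ge 0$, $$\sum_{j=0}^{p-1}(-1)^j[j]_q^n\equiv \frac{2}{[2]_q}E_{n,q}\pmod{[p]_q},$$ i.e. $\left|\frac{2}{[2]_q}E_{n,q}-\sum_{j=0}^{p-1}(-1)^j[j]_q^n\right|_p\le |[p]_q|_p$.
   Context: $\mathbb{C}_p$ is the completion of an algebraic closure of $\mathbb{Q}_p$, with absolute value $|\cdot|_p$ normalized by $|p|_p=1/p$. For $x\in\mathbb{Z}_p$ put $[x]_q=\frac{1-q^x}{1-q}$ and $[x]_{-q}=\frac{1-(-q)^x}{1+q}$. For a function $f$ on $\mathbb{Z}_p$ the fermionic $p$-adic $q$-integral is $\int_{\mathbb{Z}_p}f(x)\,d\mu_{-q}(x)=\lim_{N\to\infty}\frac{1}{[p^N]_{-q}}\sum_{x=0}^{p^N-1}f(x)(-q)^x$. The $q$-Euler numbers are $E_{n,q}=\int_{\mathbb{Z}_p}[x]_q^n q^{-x}\,d\mu_{-q}(x)$; equivalently $\frac{2}{[2]_q}E_{n,q}=\lim_{N\to\infty}\sum_{x=0}^{p^N-1}(-1)^x[x]_q^n$. (They satisfy $E_{0,q}=[2]_q/2$ and $(qE+1)^n+E_{n,q}=[2]_q\delta_{0,n}$, with $E^k$ replaced by $E_{k,q}$ after expansion.) For $a,b,m\in\mathbb{C}_p$, $a\equiv b \pmod m$ means $|a-b|_p\le|m|_p$. *)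

theory Defs
  imports Complex_Main "HOL-Computational_Algebra.Polynomial" "HOL-Computational_Algebra.Primes"
begin

text \<open>C_p is modelled abstractly: a field of characteristic 0 with an absolute value
  va that is non-archimedean, normalised by va p = 1/p, complete, algebraically closed,
  and in which the algebraic numbers (roots of nonzero rational polynomials) are dense.
  Every such valued field is isometrically isomorphic to C_p.\<close>

definition va_cauchy :: "('a::field \<Rightarrow> real) \<Rightarrow> (nat \<Rightarrow> 'a) \<Rightarrow> bool" where
  "va_cauchy va S \<longleftrightarrow> (\<forall>e>0. \<exists>N. \<forall>m\<ge>N. \<forall>k\<ge>N. va (S m - S k) < e)"

definition va_lim :: "('a::field \<Rightarrow> real) \<Rightarrow> (nat \<Rightarrow> 'a) \<Rightarrow> 'a \<Rightarrow> bool" where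
  "va_lim va S L \<longleftrightarrow> (\<forall>e>0. \<exists>N. \<forall>m\<ge>N. va (S m - L) < e)"

definition is_Cp :: "nat \<Rightarrow> ('a::field_char_0 \<Rightarrow> real) \<Rightarrow> bool" where
  "is_Cp p va \<longleftrightarrow>
     (\<forall>x. va x \<ge> 0) \<and> (\<forall>x. va x = 0 \<longleftrightarrow> x = 0) \<and>
     (\<forall>x y. va (x * y) = va x * va y) \<and>
     (\<forall>x y. va (x + y) \<le> max (va x) (va y)) \<and>
     va (of_nat p) = 1 / real p \<and>
     (\<forall>S. va_cauchy va S \<longrightarrow> (\<exists>L. va_lim va S L)) \<and>
     (\<forall>P::'a poly. degree P \<ge> 1 \<longrightarrow> (\<exists>z. poly P z = 0)) \<and>
     (\<forall>x. \<forall>e>0. \<exists>y. va (x - y) < e \<and>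
          (\<exists>P::rat poly. P \<noteq> 0 \<and> poly (map_poly of_rat P) y = 0))"

text \<open>q-integer [x]_q for natural x, as the geometric sum 1 + q + ... + q^(x-1),
  which equals (1 - q^x)/(1 - q) for q \<noteq> 1 (and is x for q = 1).\<close>
definition qint :: "'a::field \<Rightarrow> nat \<Rightarrow> 'a" where
  "qint q x = (\<Sum>i<x. q ^ i)"

text \<open>[x]_{-q} = (1 - (-q)^x)/(1 + q), again as a geometric sum.\<close>
definition qint_neg :: "'a::field \<Rightarrow> nat \<Rightarrow> 'a" where
  "qint_neg q x = (\<Sum>i<x. (- q) ^ i)"

definition fermionic_qint :: "nat \<Rightarrow> ('a::field_char_0 \<Rightarrow> real) \<Rightarrow> 'a \<Rightarrow> (nat \<Rightarrow> 'a) \<Rightarrow> 'a" where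
  "fermionic_qint p va q f = (THE L. va_lim va
      (\<lambda>N. (1 / qint_neg q (p ^ N)) * (\<Sum>x<p ^ N. f x * (- q) ^ x)) L)"

definition qEuler :: "nat \<Rightarrow> ('a::field_char_0 \<Rightarrow> real) \<Rightarrow> nat \<Rightarrow> 'a \<Rightarrow> 'a" where
  "qEuler p va n q = fermionic_qint p va q (\<lambda>x. qint q x ^ n * inverse q ^ x)"

end

theory Submission
  imports Defs
begin


lemma qint_add: "qint q (a + b) = qint q a + q ^ a * qint q b"
  unfolding qint_def
  by (induction b) (simp_all add: algebra_simps power_add)

lemma qint_mult: "qint q (a * b) = qint q a * qint (q ^ a) b"
proof (induction b)
  case 0 then show ?case by (simp add: qint_def)
next
  case (Suc b)
  have "qint q (a * Suc b) = qint q (a * b + a)" by (simp add: add.commute)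
  also have "\<dots> = qint q (a*b) + q^(a*b) * qint q a" by (rule qint_add)
  also have "\<dots> = qint q a * qint (q ^ a) (Suc b)"
    using Suc by (simp add: qint_def power_mult algebra_simps)
  finally show ?case .
qed

lemma qint_one_minus: "(1 - q) * qint q m = 1 - q ^ m"
  unfolding qint_def by (simp add: one_diff_power_eq)

lemma sum_split_add: "(\<Sum>x<a + (c::nat). g x) = (\<Sum>x<a. g x) + (\<Sum>j<c. g (a + j))"
  by (induction c) (simp_all add: algebra_simps)

lemma alt_odd: "odd b \<Longrightarrow> (\<Sum>k<b. (-1::'a::ring_1) ^ k) = 1"
proof -
  have "(\<Sum>k<2*c. (-1::'a) ^ k) = 0" for c
    by (induction c) (simp_all add: algebra_simps)
  moreover assume "odd b"
  then obtain c where "b = Suc (2*c)" using oddE by fastforce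
  ultimately show ?thesis by simp
qed

locale nav =
  fixes va :: "'a::field \<Rightarrow> real"
  assumes va_nonneg: "va x \<ge> 0"
    and va_zero: "va x = 0 \<longleftrightarrow> x = 0"
    and va_mult: "va (x * y) = va x * va y"
    and va_ultra: "va (x + y) \<le> max (va x) (va y)"
begin

lemma va_0[simp]: "va 0 = 0" using va_zero by simp

lemma va_one: "va 1 = 1"
proof -
  have "va 1 = va 1 * va 1" using va_mult[of 1 1] by simp
  moreover have "va 1 \<noteq> 0" using va_zero by simp
  ultimately show ?thesis by simp
qed

lemma va_minus: "va (- x) = va x"
proof -
  have "va (-1) * va (-1) = 1" using va_mult[of "-1" "-1"] va_one by simp
  moreover have "\<And>a::real. a * a = 1 \<Longrightarrow> 0 \<le> a \<Longrightarrow> a = 1"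
    by (metis abs_of_nonneg abs_square_eq_1 power2_eq_square)
  ultimately have "va (-1) = 1" using va_nonneg[of "-1"] by blast
  then show ?thesis using va_mult[of "-1" x] by simp
qed

lemma va_ultra_le: "va x \<le> B \<Longrightarrow> va y \<le> B \<Longrightarrow> va (x + y) \<le> B"
  using va_ultra[of x y] by (simp add: max_def split: if_splits)

lemma va_diff_le: "va x \<le> B \<Longrightarrow> va y \<le> B \<Longrightarrow> va (x - y) \<le> B"
  using va_ultra_le[of x B "-y"] va_minus[of y] by simp

lemma va_ultra_lt: "va x < B \<Longrightarrow> va y < B \<Longrightarrow> va (x + y) < B"
  using va_ultra[of x y] by (simp add: max_def split: if_splits)

lemma va_diff: "va (x - y) \<le> max (va x) (va y)"
  using va_ultra[of x "-y"] va_minus[of y] by simp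

lemma va_commute: "va (x - y) = va (y - x)"
  using va_minus[of "x - y"] by simp

lemma va_tri: "va (x - z) \<le> max (va (x - y)) (va (y - z))"
  using va_ultra[of "x - y" "y - z"] by simp

lemma va_sum_le: "finite A \<Longrightarrow> (\<And>i. i \<in> A \<Longrightarrow> va (f i) \<le> B) \<Longrightarrow> 0 \<le> B \<Longrightarrow> va (sum f A) \<le> B"
proof (induction A rule: finite_induct)
  case empty then show ?case using va_zero by simp
next
  case (insert x F)
  have "va (f x) \<le> B" "va (sum f F) \<le> B" using insert by auto
  then show ?case using va_ultra_le insert(1,2) by simp
qed

lemma va_of_nat: "va (of_nat n) \<le> 1"
proof (induction n)
  case (Suc n)
  then show ?case using va_ultra[of 1 "of_nat n"] va_one by simp
qed simp

lemma va_power: "va (x ^ n) = va x ^ n"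
  by (induction n) (simp_all add: va_one va_mult)

lemma va_divide: "va (x / y) = va x / va y"
proof (cases "y = 0")
  case True then show ?thesis using va_zero by simp
next
  case False
  then have "x = (x / y) * y" by simp
  then have "va x = va (x/y) * va y" using va_mult by metis
  moreover have "va y \<noteq> 0" using False va_zero by simp
  ultimately show ?thesis by simp
qed

lemma va_unit: assumes "va a = 1" "va (a - b) < 1" shows "va b = 1"
proof -
  have "va b \<le> max (va a) (va (a - b))" using va_diff[of a "a - b"] by simp
  moreover have "va a \<le> max (va b) (va (a - b))" using va_ultra[of b "a - b"] by simp
  ultimately show ?thesis using assms by (auto simp: max_def split: if_splits)
qed

lemma va_pow_diff: assumes "va x \<le> 1" "va y \<le> 1" shows "va (x ^ n - y ^ n) \<le> va (x - y)"
proof (induction n)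
  case 0 then show ?case using va_zero va_nonneg by simp
next
  case (Suc n)
  have e: "x ^ Suc n - y ^ Suc n = x * (x ^ n - y ^ n) + (x - y) * y ^ n" by (simp add: algebra_simps)
  have "va x * va (x ^ n - y ^ n) \<le> 1 * va (x - y)"
    using Suc assms va_nonneg by (intro mult_mono) auto
  then have "va (x * (x ^ n - y ^ n)) \<le> va (x - y)" by (simp add: va_mult)
  moreover have "va (x - y) * va y ^ n \<le> va (x - y) * 1"
    using assms va_nonneg by (intro mult_left_mono power_le_one) auto
  then have "va ((x - y) * y ^ n) \<le> va (x - y)" by (simp add: va_mult va_power)
  ultimately show ?case unfolding e by (rule va_ultra_le)
qed

lemma va_qint_le: assumes "va r \<le> 1" shows "va (qint r k) \<le> 1"
  unfolding qint_def using assms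
  by (intro va_sum_le) (auto simp: va_power power_le_one va_nonneg)

lemma va_qint_nat: assumes "va r \<le> 1" shows "va (qint r m - of_nat m) \<le> va (1 - r)"
proof -
  have "qint r m - of_nat m = (\<Sum>i<m. r ^ i - 1)" unfolding qint_def by (simp add: sum_subtractf)
  also have "va \<dots> \<le> va (1 - r)"
  proof (rule va_sum_le)
    fix i
    have "r ^ i - 1 = - ((1 - r) * qint r i)" using qint_one_minus[of r i] by simp
    then have "va (r ^ i - 1) = va (1 - r) * va (qint r i)" by (simp add: va_minus va_mult)
    also have "\<dots> \<le> va (1 - r)" using va_qint_le[OF assms, of i] va_nonneg[of "1-r"]
      by (simp add: mult_left_le)
    finally show "va (r ^ i - 1) \<le> va (1 - r)" .
  qed (auto simp: va_nonneg)
  finally show ?thesis .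
qed

lemma generic_G:
  fixes g :: "nat \<Rightarrow> 'a"
  assumes "\<And>j k. j < m \<Longrightarrow> va (g (j + m * k) - (-1) ^ k * g j) \<le> B" and "0 \<le> B"
  shows "va ((\<Sum>x<m * b. g x) - (\<Sum>k<b. (-1) ^ k) * (\<Sum>x<m. g x)) \<le> B"
proof (induction b)
  case 0 then show ?case using va_zero assms by simp
next
  case (Suc b)
  have "(\<Sum>x<m * Suc b. g x) = (\<Sum>x<m * b. g x) + (\<Sum>j<m. g (m * b + j))"
    using sum_split_add[of g "m*b" m] by (simp add: add.commute)
  moreover have h: "(\<Sum>j<m. g (j + m*b) - (-1)^b * g j) = (\<Sum>j<m. g (j+m*b)) - (-1)^b * (\<Sum>j<m. g j)"
    by (simp add: sum_subtractf sum_distrib_left)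
  ultimately have e: "(\<Sum>x<m * Suc b. g x) - (\<Sum>k<Suc b. (-1) ^ k) * (\<Sum>x<m. g x)
     = ((\<Sum>x<m * b. g x) - (\<Sum>k<b. (-1) ^ k) * (\<Sum>x<m. g x))
       + (\<Sum>j<m. g (j + m * b) - (-1) ^ b * g j)"
    by (simp add: algebra_simps)
  have "va (\<Sum>j<m. g (j + m * b) - (-1) ^ b * g j) \<le> B"
    using assms by (intro va_sum_le) auto
  then show ?case unfolding e using Suc by (intro va_ultra_le)
qed

end



theorem theorem1:
  fixes p :: nat and va :: "'a::field_char_0 \<Rightarrow> real" and q :: 'a and n :: nat
  assumes "prime p" and "odd p"
    and "is_Cp p va"
    and "va (1 - q) < real p powr (- 1 / (real p - 1))"
  shows "va (2 / qint q 2 * qEuler p va n q - (\<Sum>j<p. (-1) ^ j * qint q j ^ n))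
           \<le> va (qint q p)"
proof -
  interpret nav va using assms(3) unfolding is_Cp_def by unfold_locales auto
  have cpl: "\<And>S. va_cauchy va S \<Longrightarrow> (\<exists>L. va_lim va S L)" and vap: "va (of_nat p) = 1 / real p"
    using assms(3) unfolding is_Cp_def by auto
  have p2: "p \<ge> 2" using prime_ge_2_nat assms(1) by blast
  have p3: "p \<ge> 3" using p2 assms(2) by presburger
  define t where "t = 1 - q"
  have vt1: "va t < 1"
  proof -
    have "- 1 / (real p - 1) < 0" using p3 by (simp add: divide_neg_pos)
    then have "real p powr (- 1 / (real p - 1)) < 1" using p3 by (intro powr_less_one) auto
    then show ?thesis using assms(4) t_def by simp
  qed
  have vq: "va q = 1" using va_unit[of 1 q] va_one vt1 t_def by simp
  have q0: "q \<noteq> 0" using vq by auto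
  have vpl: "va (of_nat p) < 1" using vap p3 by simp
  have va2: "va 2 = 1"
  proof -
    obtain k where k: "p = 2*k+1" using assms(2) oddE by blast
    have "(1::'a) = of_nat p - 2 * of_nat k" by (simp add: k)
    then have "1 \<le> max (va (of_nat p)) (va (2 * of_nat k))" using va_diff va_one by metis
    moreover have "va (2 * of_nat k) \<le> va 2"
      using va_of_nat[of k] va_nonneg[of 2] by (simp add: va_mult mult_left_le)
    moreover have "va 2 \<le> 1" using va_of_nat[of 2] by simp
    ultimately show ?thesis using vpl by (auto simp: max_def split: if_splits)
  qed
  have v1q: "va (1 + q) = 1" using va_unit[of 2 "1+q"] va2 vt1 t_def by (simp add: algebra_simps)
  define c where "c = max (1 / real p) (va t)"
  have c1: "c < 1" "0 < c" using vt1 p3 by (auto simp: c_def less_max_iff_disj)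
  define Q where "Q N = qint q (p ^ N)" for N
  have vqpow: "va (q ^ m) = 1" for m by (simp add: va_power vq)
  have vQ: "va (qint q m) \<le> 1" for m using va_qint_le vq by simp
  have e1q: "1 - q ^ m = t * qint q m" for m using qint_one_minus[of q m] t_def by simp
  have v1qm: "va (1 - q ^ m) \<le> va (qint q m)" "va (1 - q ^ m) \<le> va t" for m
  proof -
    have "va (1 - q ^ m) = va t * va (qint q m)" by (simp add: e1q va_mult)
    then show "va (1 - q ^ m) \<le> va (qint q m)" "va (1 - q ^ m) \<le> va t"
      using vt1 vQ[of m] va_nonneg[of t] va_nonneg[of "qint q m"]
      by (auto intro: mult_left_le mult_left_le_one_le)
  qed
  have qp_le: "va (qint (q ^ m) p) \<le> c" for m
  proof -
    have a: "va (qint (q ^ m) p - of_nat p) \<le> c"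
      using va_qint_nat[of "q^m" p] vqpow v1qm(2)[of m] c_def by force
    have "qint (q ^ m) p = (qint (q ^ m) p - of_nat p) + of_nat p" by simp
    also have "va \<dots> \<le> c" using a vap c_def by (intro va_ultra_le) auto
    finally show ?thesis .
  qed
  have QN: "va (Q N) \<le> c ^ N" for N
  proof (induction N)
    case 0 then show ?case by (simp add: Q_def qint_def va_one)
  next
    case (Suc N)
    have "Q (Suc N) = Q N * qint (q ^ (p ^ N)) p" unfolding Q_def power_Suc2
      by (rule qint_mult)
    then have "va (Q (Suc N)) = va (Q N) * va (qint (q ^ (p ^ N)) p)" by (simp add: va_mult)
    also have "\<dots> \<le> c ^ N * c" using Suc qp_le va_nonneg c1 by (intro mult_mono) auto
    finally show ?case by (simp add: mult.commute)
  qed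
  have QN1: "va (Q (Suc N)) \<le> va (qint q p)" for N
  proof -
    have "Q (Suc N) = qint q p * qint (q ^ p) (p ^ N)" unfolding Q_def power_Suc
      by (rule qint_mult)
    then have "va (Q (Suc N)) = va (qint q p) * va (qint (q ^ p) (p ^ N))" by (simp add: va_mult)
    also have "\<dots> \<le> va (qint q p)" using va_qint_le[of "q^p" "p^N"] vqpow va_nonneg
      by (simp add: mult_left_le)
    finally show ?thesis .
  qed
  define S where "S m = (\<Sum>x<m. (-1) ^ x * qint q x ^ n)" for m
  define D where "D m = qint_neg q m" for m
  have vm1: "va ((-1) ^ k) = 1" for k by (simp add: va_power va_minus va_one)
  have vS: "va (S m) \<le> 1" for m unfolding S_def
    by (intro va_sum_le) (auto simp: va_mult va_power va_minus va_one vQ power_le_one va_nonneg)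
  have vD: "va (D m) = 1" if "odd m" for m
  proof -
    have "D m - (\<Sum>k<m. (-1) ^ k) = (\<Sum>i<m. (- q) ^ i - (-1) ^ i)"
      unfolding D_def qint_neg_def by (simp only: sum_subtractf)
    also have "\<dots> = (\<Sum>i<m. (-1) ^ i * (q ^ i - 1))"
      by (rule sum.cong) (simp_all only: power_minus[of q] right_diff_distrib mult_1_right)
    also have "va \<dots> \<le> va t"
    proof (rule va_sum_le)
      fix i
      have "va ((-1) ^ i * (q ^ i - 1)) = va (1 - q ^ i)" by (simp add: va_mult vm1 va_commute)
      then show "va ((-1) ^ i * (q ^ i - 1)) \<le> va t" using v1qm(2) by simp
    qed (auto simp: va_nonneg)
    finally have "va (1 - D m) < 1" using alt_odd[OF that] vt1 va_commute by (metis order.strict_trans1)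
    then show ?thesis using va_unit[of 1 "D m"] va_one by simp
  qed
  have GS: "va (S (m * b) - (\<Sum>k<b. (-1) ^ k) * S m) \<le> va (qint q m)" if "odd m" for m b
    unfolding S_def
  proof (rule generic_G)
    fix j k assume "j < m"
    have mk: "(-1::'a) ^ (m * k) = (-1) ^ k" using that by (simp add: power_mult)
    have qj: "qint q (j + m * k) - qint q j = q ^ j * (qint q m * qint (q ^ m) k)"
      by (simp add: qint_add qint_mult)
    have "(-1) ^ (j + m * k) * qint q (j + m * k) ^ n - (-1) ^ k * ((-1) ^ j * qint q j ^ n)
        = (-1) ^ j * (-1) ^ k * (qint q (j + m * k) ^ n - qint q j ^ n)"
      by (simp only: power_add mk) (simp add: algebra_simps)
    then have "va ((-1) ^ (j + m * k) * qint q (j + m * k) ^ n - (-1) ^ k * ((-1) ^ j * qint q j ^ n))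
        = va (qint q (j + m * k) ^ n - qint q j ^ n)" by (simp add: va_mult vm1)
    also have "\<dots> \<le> va (qint q (j + m * k) - qint q j)" using vQ by (intro va_pow_diff)
    also have "\<dots> = va (qint q m) * va (qint (q ^ m) k)" by (simp add: qj va_mult vqpow)
    also have "\<dots> \<le> va (qint q m)" using va_qint_le[of "q^m" k] vqpow va_nonneg
      by (simp add: mult_left_le)
    finally show "va ((-1) ^ (j + m * k) * qint q (j + m * k) ^ n - (-1) ^ k * ((-1) ^ j * qint q j ^ n))
        \<le> va (qint q m)" .
  qed (simp add: va_nonneg)
  have GD: "va (D (m * b) - (\<Sum>k<b. (-1) ^ k) * D m) \<le> va (qint q m)" if "odd m" for m b
    unfolding D_def qint_neg_def
  proof (rule generic_G)
    fix j k assume "j < m"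
    have mq: "(- q) ^ m = - (q ^ m)" using that by (simp add: power_minus[of q])
    have "(- q) ^ (j + m * k) = (- q) ^ j * ((-1) ^ k * (q ^ m) ^ k)"
      by (simp only: power_add power_mult mq power_minus[of "q^m"])
    then have "(- q) ^ (j + m * k) - (-1) ^ k * (- q) ^ j = (- q) ^ j * (-1) ^ k * ((q ^ m) ^ k - 1)"
      by (simp add: algebra_simps)
    then have "va ((- q) ^ (j + m * k) - (-1) ^ k * (- q) ^ j) = va ((q ^ m) ^ k - 1)"
      by (simp add: va_mult va_power va_minus vq va_one)
    also have "\<dots> = va (1 - q ^ (m * k))"
      by (simp add: va_commute[of "(q^m)^k"] power_mult)
    also have "\<dots> \<le> va (qint q (m * k))" by (rule v1qm(1))
    also have "\<dots> = va (qint q m) * va (qint (q ^ m) k)" by (simp add: qint_mult va_mult)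
    also have "\<dots> \<le> va (qint q m)" using va_qint_le[of "q^m" k] vqpow va_nonneg
      by (simp add: mult_left_le)
    finally show "va ((- q) ^ (j + m * k) - (-1) ^ k * (- q) ^ j) \<le> va (qint q m)" .
  qed (simp add: va_nonneg)
  have altp: "(\<Sum>k<p. (-1::'a) ^ k) = 1" using alt_odd assms(2) by blast
  define A where "A N = S (p ^ N) / D (p ^ N)" for N
  have step: "va (A (Suc N) - A N) \<le> va (Q N)" for N
  proof -
    define m where "m = p ^ N"
    have om: "odd m" "odd (m * p)" using assms(2) by (auto simp: m_def)
    have hS: "va (S (m * p) - S m) \<le> va (Q N)" using GS[OF om(1), of p] altp by (simp add: Q_def m_def)
    have hD: "va (D (m * p) - D m) \<le> va (Q N)" using GD[OF om(1), of p] altp by (simp add: Q_def m_def)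
    have d1: "va (D m) = 1" "va (D (m * p)) = 1" using vD om by auto
    then have d0: "D m \<noteq> 0" "D (m * p) \<noteq> 0" by auto
    have "A (Suc N) - A N = (S (m * p) * D m - D (m * p) * S m) / (D (m * p) * D m)"
      unfolding A_def m_def[symmetric] power_Suc2 using d0 by (simp add: diff_frac_eq)
    also have "S (m * p) * D m - D (m * p) * S m = (S (m * p) - S m) * D m - S m * (D (m * p) - D m)"
      by (simp add: algebra_simps)
    finally have "va (A (Suc N) - A N) = va ((S (m * p) - S m) * D m - S m * (D (m * p) - D m))"
      by (simp add: va_divide va_mult d1)
    also have "\<dots> \<le> va (Q N)"
    proof (rule va_diff_le)
      show "va ((S (m * p) - S m) * D m) \<le> va (Q N)" using hS by (simp add: va_mult d1)
      have "va (S m) * va (D (m * p) - D m) \<le> 1 * va (Q N)"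
        using hD vS[of m] va_nonneg by (intro mult_mono) auto
      then show "va (S m * (D (m * p) - D m)) \<le> va (Q N)" by (simp add: va_mult)
    qed
    finally show ?thesis .
  qed
  have chain: "va (A (N + k) - A N) \<le> c ^ N" for N k
  proof (induction k)
    case 0 then show ?case using c1 by simp
  next
    case (Suc k)
    have eq: "A (N + Suc k) - A N = (A (Suc (N + k)) - A (N + k)) + (A (N + k) - A N)" by simp
    have "va (A (Suc (N + k)) - A (N + k)) \<le> c ^ N"
    proof -
      have "c ^ (N + k) \<le> c ^ N" by (rule power_decreasing) (use c1 in auto)
      then show ?thesis using step[of "N+k"] QN[of "N+k"] by simp
    qed
    then show ?case unfolding eq using Suc by (intro va_ultra_le)
  qed
  have chain1: "va (A (Suc k) - A 1) \<le> va (qint q p)" for k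
  proof (induction k)
    case 0 then show ?case using va_nonneg by simp
  next
    case (Suc k)
    have eq: "A (Suc (Suc k)) - A 1 = (A (Suc (Suc k)) - A (Suc k)) + (A (Suc k) - A 1)" by simp
    have "va (A (Suc (Suc k)) - A (Suc k)) \<le> va (qint q p)"
      using step[of "Suc k"] QN1[of k] by simp
    then show ?case unfolding eq using Suc by (intro va_ultra_le)
  qed
  have "va_cauchy va A" unfolding va_cauchy_def
  proof (intro allI impI)
    fix e :: real assume "e > 0"
    then obtain N where N: "c ^ N < e" using real_arch_pow_inv c1 by blast
    show "\<exists>N. \<forall>m\<ge>N. \<forall>k\<ge>N. va (A m - A k) < e"
    proof (intro exI allI impI)
      fix m k assume "N \<le> m" "N \<le> k"
      then have "va (A m - A N) \<le> c ^ N" "va (A k - A N) \<le> c ^ N"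
        using chain[of N "m - N"] chain[of N "k - N"] by auto
      moreover have "A m - A k = (A m - A N) - (A k - A N)" by simp
      ultimately have "va (A m - A k) \<le> c ^ N" using va_diff_le[of "A m - A N" "c^N" "A k - A N"] by simp
      then show "va (A m - A k) < e" using N by simp
    qed
  qed
  then obtain L where L: "va_lim va A L" using cpl by blast
  have uniq: "L' = L" if L': "va_lim va A L'" for L'
  proof (rule ccontr)
    assume "L' \<noteq> L"
    then have d: "va (L' - L) > 0" using va_nonneg va_zero by (metis less_eq_real_def right_minus_eq)
    obtain N1 where N1: "\<forall>m\<ge>N1. va (A m - L') < va (L' - L)" using L' d unfolding va_lim_def by blast
    obtain N2 where N2: "\<forall>m\<ge>N2. va (A m - L) < va (L' - L)" using L d unfolding va_lim_def by blast
    define m where "m = max N1 N2"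
    have "L' - L = (A m - L) - (A m - L')" by simp
    then have "va (L' - L) \<le> max (va (A m - L)) (va (A m - L'))" using va_diff by metis
    moreover have "va (A m - L) < va (L' - L)" "va (A m - L') < va (L' - L)"
      using N1 N2 m_def by auto
    ultimately show False by (simp add: max_def split: if_splits)
  qed
  have seq: "(\<lambda>N. 1 / qint_neg q (p ^ N) * (\<Sum>x<p ^ N. qint q x ^ n * inverse q ^ x * (- q) ^ x)) = A"
  proof
    fix N
    have t: "qint q x ^ n * inverse q ^ x * (- q) ^ x = (-1) ^ x * qint q x ^ n" for x
    proof -
      have "inverse q ^ x * q ^ x = 1" using q0 by (simp add: power_inverse)
      then show ?thesis by (simp add: power_minus[of q] algebra_simps)
    qed
    have "(\<Sum>x<p ^ N. qint q x ^ n * inverse q ^ x * (- q) ^ x) = S (p ^ N)"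
      unfolding S_def by (rule sum.cong) (simp_all only: t)
    then show "1 / qint_neg q (p ^ N) * (\<Sum>x<p ^ N. qint q x ^ n * inverse q ^ x * (- q) ^ x) = A N"
      by (simp add: A_def D_def)
  qed
  have E: "qEuler p va n q = L"
  proof -
    have "qEuler p va n q = (THE L. va_lim va A L)" unfolding qEuler_def fermionic_qint_def seq ..
    also have "\<dots> = L" using L uniq by (rule the_equality)
    finally show ?thesis .
  qed
  have q2: "qint q 2 = 1 + q" by (simp add: qint_def numeral_2_eq_2)
  have hq: "va (2 / qint q 2) = 1" by (simp add: q2 va_divide va2 v1q)
  have fin1: "va (2 / qint q 2 * A 1 - S p) \<le> va (qint q p)"
  proof -
    have A1: "A 1 = S p / D p" by (simp add: A_def)
    have "(1 - (- q)) * qint (- q) p = 1 - (- q) ^ p" by (rule qint_one_minus)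
    then have DD: "(1 + q) * D p = 1 + q ^ p" using assms(2)
      by (simp add: D_def qint_neg_def qint_def power_minus[of q])
    have vqp: "va (1 - q ^ p) \<le> va (qint q p)" "va (1 - q ^ p) < 1" using v1qm vt1 by (auto intro: order.strict_trans1)
    have "va (1 + q ^ p) = 1" using va_unit[of 2 "1 + q ^ p"] va2 vqp by (simp add: algebra_simps)
    then have n0: "1 + q ^ p \<noteq> 0" by auto
    have n1: "1 + q \<noteq> 0" "D p \<noteq> 0" using v1q vD[OF assms(2)] by auto
    have "2 / qint q 2 * A 1 - S p = S p * (1 - q ^ p) / (1 + q ^ p)"
    proof -
      have "2 / qint q 2 * A 1 = 2 * S p / ((1 + q) * D p)" unfolding A1 q2 by simp
      also have "\<dots> = 2 * S p / (1 + q ^ p)" by (simp only: DD)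
      finally show ?thesis using n0 by (simp add: field_simps)
    qed
    then have "va (2 / qint q 2 * A 1 - S p) = va (S p) * va (1 - q ^ p)"
      by (simp add: va_divide va_mult \<open>va (1 + q ^ p) = 1\<close>)
    also have "\<dots> \<le> va (qint q p)" using vS[of p] vqp va_nonneg
      by (meson mult_le_one order.trans mult_left_le_one_le)
    finally show ?thesis .
  qed
  show ?thesis
  proof (rule ccontr)
    define X where "X = 2 / qint q 2 * L"
    assume "\<not> ?thesis"
    then have lt: "va (qint q p) < va (X - S p)" by (simp add: X_def E S_def)
    then have "va (X - S p) > 0" using va_nonneg by (meson le_less_trans)
    then obtain N where N: "\<forall>m\<ge>N. va (A m - L) < va (X - S p)" using L unfolding va_lim_def by blast
    have "X - S p = 2 / qint q 2 * (L - A (Suc N)) + (2 / qint q 2 * (A (Suc N) - A 1) + (2 / qint q 2 * A 1 - S p))"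
    proof -
      have "\<And>K a b s :: 'a. K * L - s = K * (L - a) + (K * (a - b) + (K * b - s))"
        by (simp add: algebra_simps)
      then show ?thesis unfolding X_def by blast
    qed
    moreover have "va (2 / qint q 2 * (L - A (Suc N))) < va (X - S p)"
    proof -
      have "va (2 / qint q 2 * (L - A (Suc N))) = va (A (Suc N) - L)"
        unfolding va_mult hq mult_1_left by (rule va_commute)
      then show ?thesis using N by simp
    qed
    moreover have "va (2 / qint q 2 * (A (Suc N) - A 1)) < va (X - S p)"
    proof -
      have "va (2 / qint q 2 * (A (Suc N) - A 1)) = va (A (Suc N) - A 1)"
        unfolding va_mult hq mult_1_left ..
      then show ?thesis using chain1[of N] lt by simp
    qed
    moreover have "va (2 / qint q 2 * A 1 - S p) < va (X - S p)" using fin1 lt by simp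
    ultimately have "va (X - S p) < va (X - S p)" using va_ultra_lt by metis
    then show False by simp
  qed
qed

end
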